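(* For arbitrary real $b_1,\dots,b_s,c_1,\dots,c_s$, the polynomials $v_{i_1,\dots,i_k}=v_{i_1,\dots,i_k}(b_1,c_1,\dots,b_s,c_s)$ satisfy, for all multi-indices $(i_1,\dots,i_n)$ and $(i_{n+1},\dots,i_{n+m})$ of positive integers, $$v_{i_1,\dots,i_n}\,v_{i_{n+1},\dots,i_{n+m}}=\sum_{\sigma\in\mathrm{Sh}(n,m)}v_{i_{\sigma(1)},\dots,i_{\sigma(n+m)}}.$$ The same identities hold for the coefficients $\frac1{(i_1+\cdots+i_k)\cdots(i_1+i_2)i_1}$.
   Context: $v_{i_1,\dots,i_k}=\sum_{1\le j_1\le\cdots\le j_k\le s}\frac{b_{j_1}\cdots b_{j_k}}{\sigma(j_1,\dots,j_k)}c_{j_1}^{i_1-1}\cdots c_{j_k}^{i_k-1}$, where $\sigma(j_1,\dots,j_k)=1$ if $j_1<\cdots<j_k$ and $\sigma(j_1,\dots,j_k)=\ell!\,\sigma(j_{\ell+1},\dots,j_k)$ if $j_1=\cdots=j_\ell<j_{\ell+1}\le\cdots\le j_k$. $\mathrm{Sh}(n,m)$ is the set of the $(n+m)!/(n!m!)$ permutations $\sigma$ of $(1,\dots,n+m)$ obtained by interleaving $(1,\dots,n)$ and $(n+1,\dots,n+m)$ while preserving their respective orders. *)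

theory Defs
  imports Complex_Main "HOL-Combinatorics.Permutations"
begin

function sigma_fac :: "nat list \<Rightarrow> nat" where
  "sigma_fac [] = 1"
| "sigma_fac (x # xs) =
     fact (length (takeWhile (\<lambda>y. y = x) (x # xs))) * sigma_fac (dropWhile (\<lambda>y. y = x) xs)"
  by pat_completeness auto
termination
  by (relation "measure length") (auto simp: le_imp_less_Suc length_dropWhile_le)

definition incr_words :: "nat \<Rightarrow> nat \<Rightarrow> nat list set" where
  "incr_words s k = {j. length j = k \<and> sorted j \<and> set j \<subseteq> {1..s}}"

definition vpoly :: "(nat \<Rightarrow> real) \<Rightarrow> (nat \<Rightarrow> real) \<Rightarrow> nat \<Rightarrow> nat list \<Rightarrow> real" where
  "vpoly b c s i =
     (\<Sum>j\<in>incr_words s (length i).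
        (\<Prod>l<length i. b (j ! l)) / real (sigma_fac j) * (\<Prod>l<length i. c (j ! l) ^ (i ! l - 1)))"

definition wcoef :: "nat list \<Rightarrow> real" where
  "wcoef i = 1 / (\<Prod>l<length i. real (\<Sum>t\<le>l. i ! t))"

text \<open>Sh(n,m), with positions and values 0-based: permutations sigma of {0..<n+m}
  such that, read as the word (sigma 0, ..., sigma (n+m-1)), the letters 0..<n appear
  in increasing order and the letters n..<n+m appear in increasing order.\<close>
definition shuffles_perm :: "nat \<Rightarrow> nat \<Rightarrow> (nat \<Rightarrow> nat) set" where
  "shuffles_perm n m = {\<sigma>. \<sigma> permutes {0..<n+m} \<and>
      (\<forall>p q. p < q \<and> q < n + m \<and> \<sigma> p < n \<and> \<sigma> q < n \<longrightarrow> \<sigma> p < \<sigma> q) \<and>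
      (\<forall>p q. p < q \<and> q < n + m \<and> n \<le> \<sigma> p \<and> n \<le> \<sigma> q \<longrightarrow> \<sigma> p < \<sigma> q)}"

definition permute_word :: "(nat \<Rightarrow> nat) \<Rightarrow> nat list \<Rightarrow> nat list" where
  "permute_word \<sigma> w = map (\<lambda>p. w ! \<sigma> p) [0..<length w]"

end

theory Submission
  imports Defs
begin


fun shuf :: "'a list \<Rightarrow> 'a list \<Rightarrow> 'a list list" where
  "shuf [] [] = [[]]"
| "shuf [] (b#ys) = map ((#) b) (shuf [] ys)"
| "shuf (a#xs) [] = map ((#) a) (shuf xs [])"
| "shuf (a#xs) (b#ys) = map ((#) a) (shuf xs (b#ys)) @ map ((#) b) (shuf (a#xs) ys)"

definition Ssum :: "('a list \<Rightarrow> real) \<Rightarrow> 'a list \<Rightarrow> 'a list \<Rightarrow> real" where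
  "Ssum G X Y = sum_list (map G (shuf X Y))"

lemma Ssum_simps:
  "Ssum G [] [] = G []"
  "Ssum G [] (b#Y) = Ssum (\<lambda>u. G (b#u)) [] Y"
  "Ssum G (a#X) [] = Ssum (\<lambda>u. G (a#u)) X []"
  "Ssum G (a#X) (b#Y) = Ssum (\<lambda>u. G (a#u)) X (b#Y) + Ssum (\<lambda>u. G (b#u)) (a#X) Y"
  by (simp_all add: Ssum_def o_def)

lemma Ssum_add: "Ssum (\<lambda>u. f u + g u) X Y = Ssum f X Y + Ssum g X Y"
  by (simp add: Ssum_def sum_list_addf)

lemma Ssum_cmult: "Ssum (\<lambda>u. k * f u) X Y = k * Ssum f X Y"
  by (simp add: Ssum_def sum_list_const_mult)

lemma Ssum_cong: "(\<And>u. u \<in> set (shuf X Y) \<Longrightarrow> f u = g u) \<Longrightarrow> Ssum f X Y = Ssum g X Y"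
  unfolding Ssum_def by (metis map_cong)

fun splits :: "'a list \<Rightarrow> ('a list \<times> 'a list) list" where
  "splits [] = [([],[])]"
| "splits (a#X) = ([], a#X) # map (\<lambda>(u,v). (a#u, v)) (splits X)"

lemma splits_app: "(u,v) \<in> set (splits X) \<Longrightarrow> u @ v = X"
  by (induction X arbitrary: u v) auto

definition Dsum :: "('a list \<Rightarrow> 'a list \<Rightarrow> real) \<Rightarrow> 'a list \<Rightarrow> real" where
  "Dsum \<Phi> z = sum_list (map (\<lambda>(u,v). \<Phi> u v) (splits z))"

lemma Dsum_simps:
  "Dsum \<Phi> [] = \<Phi> [] []"
  "Dsum \<Phi> (a#z) = \<Phi> [] (a#z) + Dsum (\<lambda>u. \<Phi> (a#u)) z"
  by (simp_all add: Dsum_def o_def case_prod_unfold)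

definition Rsum :: "('a list \<Rightarrow> 'a list \<Rightarrow> real) \<Rightarrow> 'a list \<Rightarrow> 'a list \<Rightarrow> real" where
  "Rsum \<Phi> X Y = sum_list (map (\<lambda>(x1,x2). sum_list (map (\<lambda>(y1,y2).
       Ssum (\<lambda>u. Ssum (\<Phi> u) x2 y2) x1 y1) (splits Y))) (splits X))"

lemma Ssum_Cons_left:
  "Ssum G (a#X) Y = Ssum (\<lambda>u. G (a#u)) X Y + (case Y of [] \<Rightarrow> 0 | b#Y' \<Rightarrow> Ssum (\<lambda>u. G (b#u)) (a#X) Y')"
  by (cases Y) (simp_all add: Ssum_simps)

lemma Ssum_Nil_left:
  "Ssum G [] Y = (case Y of [] \<Rightarrow> G [] | b#Y' \<Rightarrow> Ssum (\<lambda>u. G (b#u)) [] Y')"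
  by (cases Y) (simp_all add: Ssum_simps)

lemma Rsum_simps:
  "Rsum \<Phi> [] [] = \<Phi> [] []"
  "Rsum \<Phi> [] (b#Y) = Ssum (\<Phi> []) [] (b#Y) + Rsum (\<lambda>u. \<Phi> (b#u)) [] Y"
  "Rsum \<Phi> (a#X) [] = Ssum (\<Phi> []) (a#X) [] + Rsum (\<lambda>u. \<Phi> (a#u)) X []"
  "Rsum \<Phi> (a#X) (b#Y) = Ssum (\<Phi> []) (a#X) (b#Y) + Rsum (\<lambda>u. \<Phi> (a#u)) X (b#Y)
       + Rsum (\<lambda>u. \<Phi> (b#u)) (a#X) Y"
  by (simp_all add: Rsum_def o_def case_prod_unfold Ssum_simps Ssum_Cons_left Ssum_Nil_left sum_list_addf algebra_simps)

lemma Lsum_simps: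
  "Ssum (Dsum \<Phi>) [] [] = \<Phi> [] []"
  "Ssum (Dsum \<Phi>) [] (b#Y) = Ssum (\<Phi> []) [] (b#Y) + Ssum (Dsum (\<lambda>u. \<Phi> (b#u))) [] Y"
  "Ssum (Dsum \<Phi>) (a#X) [] = Ssum (\<Phi> []) (a#X) [] + Ssum (Dsum (\<lambda>u. \<Phi> (a#u))) X []"
  "Ssum (Dsum \<Phi>) (a#X) (b#Y) = Ssum (\<Phi> []) (a#X) (b#Y) + Ssum (Dsum (\<lambda>u. \<Phi> (a#u))) X (b#Y)
       + Ssum (Dsum (\<lambda>u. \<Phi> (b#u))) (a#X) Y"
  by (simp_all add: Ssum_simps Dsum_simps Ssum_add)

lemma L_eq_R: "Ssum (Dsum \<Phi>) X Y = Rsum \<Phi> X Y"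
proof (induction "length X + length Y" arbitrary: \<Phi> X Y rule: less_induct)
  case less
  show ?case
  proof (cases X)
    case Nil
    then show ?thesis
      by (cases Y) (simp_all add: Lsum_simps Rsum_simps less)
  next
    case (Cons a X')
    then show ?thesis
      by (cases Y) (simp_all add: Lsum_simps Rsum_simps less)
  qed
qed

lemma sum_list_prod_helper:
  "(\<Sum>x\<leftarrow>L. F x) * (\<Sum>y\<leftarrow>M. G y) = (\<Sum>x\<leftarrow>L. \<Sum>y\<leftarrow>M. F x * (G y::real))"
  by (induction L) (simp_all add: algebra_simps sum_list_const_mult)

definition chr :: "'a set \<Rightarrow> ('a list \<Rightarrow> real) \<Rightarrow> bool" where
  "chr A F \<longleftrightarrow> (\<forall>X Y. set X \<subseteq> A \<longrightarrow> set Y \<subseteq> A \<longrightarrow> F X * F Y = Ssum F X Y)"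

definition conv :: "('a list \<Rightarrow> real) \<Rightarrow> ('a list \<Rightarrow> real) \<Rightarrow> 'a list \<Rightarrow> real" where
  "conv f g = Dsum (\<lambda>u v. f u * g v)"

lemma chr_conv:
  assumes f: "chr A f" and g: "chr A g"
  shows "chr A (conv f g)"
  unfolding chr_def
proof (intro allI impI)
  fix X Y assume X: "set X \<subseteq> A" and Y: "set Y \<subseteq> A"
  have "conv f g X * conv f g Y = sum_list (map (\<lambda>(x1,x2). sum_list (map (\<lambda>(y1,y2).
       (f x1 * f y1) * (g x2 * g y2)) (splits Y))) (splits X))"
  proof -
    have "conv f g X * conv f g Y = (\<Sum>x\<leftarrow>splits X. (\<Sum>y\<leftarrow>splits Y.
         (case x of (x1,x2) \<Rightarrow> f x1 * g x2) * (case y of (y1,y2) \<Rightarrow> f y1 * g y2)))"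
      unfolding conv_def Dsum_def by (rule sum_list_prod_helper)
    then show ?thesis by (simp add: case_prod_unfold mult_ac)
  qed
  also have "\<dots> = sum_list (map (\<lambda>(x1,x2). sum_list (map (\<lambda>(y1,y2).
       Ssum f x1 y1 * Ssum g x2 y2) (splits Y))) (splits X))"
  proof -
    have "\<And>x1 x2 y1 y2. (x1,x2) \<in> set (splits X) \<Longrightarrow> (y1,y2) \<in> set (splits Y) \<Longrightarrow>
       (f x1 * f y1) * (g x2 * g y2) = Ssum f x1 y1 * Ssum g x2 y2"
    proof -
      fix x1 x2 y1 y2 assume "(x1,x2) \<in> set (splits X)" "(y1,y2) \<in> set (splits Y)"
      then have "x1 @ x2 = X" "y1 @ y2 = Y" by (auto dest: splits_app)
      then show "(f x1 * f y1) * (g x2 * g y2) = Ssum f x1 y1 * Ssum g x2 y2"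
        using f g X Y unfolding chr_def by auto
    qed
    then show ?thesis
      by (intro arg_cong[where f=sum_list] map_cong refl) (fastforce simp: case_prod_unfold intro!: arg_cong[where f=sum_list] map_cong)
  qed
  also have "\<dots> = Rsum (\<lambda>u v. f u * g v) X Y"
    by (simp add: Rsum_def Ssum_def sum_list_const_mult sum_list_mult_const case_prod_unfold)
  also have "\<dots> = Ssum (conv f g) X Y"
    by (simp add: L_eq_R conv_def)
  finally show "conv f g X * conv f g Y = Ssum (conv f g) X Y" .
qed



lemma shuf_Nil_left[simp]: "shuf [] Y = [Y]"
  by (induction Y) auto

lemma shuf_Nil_right[simp]: "shuf X [] = [X]"
  by (induction X) auto

lemma shuf_length: "z \<in> set (shuf X Y) \<Longrightarrow> length z = length X + length Y"
  by (induction X Y arbitrary: z rule: shuf.induct) auto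

lemma shuf_prod: "z \<in> set (shuf X Y) \<Longrightarrow> prod_list (map e z) = prod_list (map e X) * (prod_list (map e Y) :: 'b::comm_monoid_mult)"
  by (induction X Y arbitrary: z rule: shuf.induct) (auto simp: mult_ac)

lemma shuf_sum: "z \<in> set (shuf X Y) \<Longrightarrow> sum_list z = sum_list X + (sum_list Y :: nat)"
  by (induction X Y arbitrary: z rule: shuf.induct) auto

lemma length_shuf: "length (shuf X Y) = (length X + length Y) choose length X"
  by (induction X Y rule: shuf.induct) simp_all

lemma set_shuf: "set (shuf X Y) = shuffles X Y"
  by (induction X Y rule: shuf.induct) simp_all

lemma distinct_shuf: "distinct X \<Longrightarrow> distinct Y \<Longrightarrow> set X \<inter> set Y = {} \<Longrightarrow> distinct (shuf X Y)"
  by (induction X Y rule: shuf.induct) (auto simp: distinct_map set_shuf dest: set_shuffles)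

lemma map_shuf: "shuf (map g X) (map g Y) = map (map g) (shuf X Y)"
  by (induction X Y rule: shuf.induct) simp_all

lemma Ssum_set: "distinct X \<Longrightarrow> distinct Y \<Longrightarrow> set X \<inter> set Y = {} \<Longrightarrow>
   Ssum G X Y = (\<Sum>z\<in>shuffles X Y. G z)"
  unfolding Ssum_def by (simp add: sum_list_distinct_conv_sum_set distinct_shuf set_shuf)

lemma Ssum_map: "Ssum F (map g X) (map g Y) = Ssum (\<lambda>z. F (map g z)) X Y"
  by (simp add: Ssum_def map_shuf o_def)

definition Echr :: "('a \<Rightarrow> real) \<Rightarrow> 'a list \<Rightarrow> real" where
  "Echr e w = prod_list (map e w) / fact (length w)"

lemma sum_list_const_real: "(\<Sum>x\<leftarrow>L. (k::real)) = real (length L) * k"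
  by (induction L) (auto simp: algebra_simps)

lemma chr_Echr: "chr A (Echr e)"
  unfolding chr_def
proof (intro allI impI)
  fix X Y :: "'a list"
  have "Ssum (Echr e) X Y = Ssum (\<lambda>_. prod_list (map e X) * prod_list (map e Y) / fact (length X + length Y)) X Y"
    by (rule Ssum_cong) (simp add: Echr_def shuf_length shuf_prod)
  also have "\<dots> = real ((length X + length Y) choose length X) *
      (prod_list (map e X) * prod_list (map e Y) / fact (length X + length Y))"
    by (simp add: Ssum_def sum_list_const_real length_shuf)
  also have "\<dots> = Echr e X * Echr e Y"
    by (simp add: Echr_def binomial_fact)
  finally show "Echr e X * Echr e Y = Ssum (Echr e) X Y" by simp
qed

definition Zc :: "'a list \<Rightarrow> real" where "Zc w = (if w = [] then 1 else 0)"

lemma chr_Zc: "chr A Zc"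
  unfolding chr_def
proof (intro allI impI)
  fix X Y :: "'a list"
  show "Zc X * Zc Y = Ssum Zc X Y"
  proof (cases "X = [] \<and> Y = []")
    case True then show ?thesis by (simp add: Zc_def Ssum_def)
  next
    case False
    then have "Ssum Zc X Y = Ssum (\<lambda>_. 0) X Y"
      by (intro Ssum_cong) (auto simp: Zc_def dest!: shuf_length)
    then show ?thesis using False by (auto simp: Zc_def Ssum_def)
  qed
qed

fun Wr :: "nat list \<Rightarrow> real" where
  "Wr [] = 1"
| "Wr (a#w) = Wr w / real (sum_list (a#w))"

lemma chr_Wr_aux: "set X \<subseteq> {x. 0<x} \<Longrightarrow> set Y \<subseteq> {x. 0<x} \<Longrightarrow> Wr X * Wr Y = Ssum Wr X Y"
proof (induction "length X + length Y" arbitrary: X Y rule: less_induct)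
  case less
  show ?case
  proof (cases X)
    case Nil then show ?thesis by (simp add: Ssum_def)
  next
    case (Cons a X')
    show ?thesis
    proof (cases Y)
      case Nil then show ?thesis by (simp add: Ssum_def)
    next
      case (Cons b Y')
      define S where "S = real (sum_list (a#X') + sum_list (b#Y'))"
      define SX where "SX = real (sum_list (a#X'))"
      define SY where "SY = real (sum_list (b#Y'))"
      have SX: "SX > 0" using less.prems \<open>X = a#X'\<close> by (simp add: SX_def)
      have SY: "SY > 0" using less.prems \<open>Y = b#Y'\<close> by (simp add: SY_def)
      have S: "S = SX + SY" by (simp add: S_def SX_def SY_def)
      have 1: "Ssum (\<lambda>u. Wr (a#u)) X' (b#Y') = Ssum (\<lambda>u. Wr u / S) X' (b#Y')"
        by (rule Ssum_cong) (auto simp: S_def dest!: shuf_sum)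
      have 2: "Ssum (\<lambda>u. Wr (b#u)) (a#X') Y' = Ssum (\<lambda>u. Wr u / S) (a#X') Y'"
        by (rule Ssum_cong) (auto simp: S_def dest!: shuf_sum)
      have d: "\<And>X Y. Ssum (\<lambda>u. Wr u / S) X Y = Ssum Wr X Y / S"
        using Ssum_cmult[of "1/S" Wr] by (simp add: field_simps)
      have IH1: "Wr X' * Wr (b#Y') = Ssum Wr X' (b#Y')"
        using less.prems \<open>X = a#X'\<close> \<open>Y = b#Y'\<close> by (intro less.hyps) auto
      have IH2: "Wr (a#X') * Wr Y' = Ssum Wr (a#X') Y'"
        using less.prems \<open>X = a#X'\<close> \<open>Y = b#Y'\<close> by (intro less.hyps) auto
      have "Ssum Wr X Y = Ssum (\<lambda>u. Wr (a#u)) X' (b#Y') + Ssum (\<lambda>u. Wr (b#u)) (a#X') Y'"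
        using \<open>X = a#X'\<close> \<open>Y = b#Y'\<close> by (simp only: Ssum_simps(4))
      also have "\<dots> = (Wr X' * Wr (b#Y') + Wr (a#X') * Wr Y') / S"
        unfolding 1 2 d IH1 IH2 by (simp add: add_divide_distrib)
      also have "\<dots> = Wr X * Wr Y"
        using \<open>X = a#X'\<close> \<open>Y = b#Y'\<close> SX SY S
          add_pos_pos[OF mult_pos_pos[OF SX mult_pos_pos[OF SX SY]] mult_pos_pos[OF SX mult_pos_pos[OF SY SY]]]
        by (simp add: SX_def[symmetric] SY_def[symmetric] del: sum_list.Cons) (simp add: field_simps algebra_simps)
      finally show ?thesis by simp
    qed
  qed
qed

lemma chr_Wr: "chr {x. 0<x} Wr"
  unfolding chr_def using chr_Wr_aux by blast



lemma Dsum_nth: "Dsum \<Phi> w = (\<Sum>p\<le>length w. \<Phi> (take p w) (drop p w))"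
proof (induction w arbitrary: \<Phi>)
  case Nil then show ?case by (simp add: Dsum_simps)
next
  case (Cons a w) then show ?case
    by (simp add: Dsum_simps sum.atMost_Suc_shift del: sum.atMost_Suc)
qed

lemma prod_nth_map2: "length j = length i \<Longrightarrow> (\<Prod>l<length i. f (j!l) (i!l)) = prod_list (map2 f j i)"
proof (induction j arbitrary: i)
  case Nil then show ?case by simp
next
  case (Cons x j)
  then obtain y i' where i: "i = y # i'" by (cases i) auto
  with Cons show ?case by (simp add: prod.lessThan_Suc_shift del: prod.lessThan_Suc)
qed

lemma prod_nth_map: "length j = length i \<Longrightarrow> (\<Prod>l<length i. f (j!l)) = prod_list (map f j)"
proof (induction j arbitrary: i)
  case Nil then show ?case by simp
next
  case (Cons x j)
  then obtain y i' where i: "i = y # i'" by (cases i) auto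
  with Cons show ?case by (simp add: prod.lessThan_Suc_shift del: prod.lessThan_Suc)
qed

lemma map2_replicate[simp]: "length L = n \<Longrightarrow> map2 f (replicate n d) L = map (f d) L"
  by (induction L arbitrary: n) (auto simp: Suc_length_conv)

lemma filter_rep: "d \<notin> set j \<Longrightarrow> filter (\<lambda>x. x \<noteq> d) (j @ replicate r d) = j"
  by (induction j) (auto simp: filter_empty_conv)

lemma rep_inj: "d \<notin> set j1 \<Longrightarrow> d \<notin> set j2 \<Longrightarrow> j1 @ replicate r1 d = j2 @ replicate r2 d \<Longrightarrow> j1 = j2"
proof -
  assume a: "d \<notin> set j1" "d \<notin> set j2" "j1 @ replicate r1 d = j2 @ replicate r2 d"
  have "j1 = filter (\<lambda>x. x \<noteq> d) (j1 @ replicate r1 d)" using a(1) by (rule filter_rep[symmetric])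
  also have "\<dots> = filter (\<lambda>x. x \<noteq> d) (j2 @ replicate r2 d)" using a(3) by (rule arg_cong)
  also have "\<dots> = j2" using a(2) by (rule filter_rep)
  finally show "j1 = j2" .
qed

lemma tw_app: "\<not>(\<forall>y\<in>set xs. P y) \<Longrightarrow> takeWhile P (xs@ys) = takeWhile P xs"
  by (induction xs) auto

lemma dw_app: "\<not>(\<forall>y\<in>set xs. P y) \<Longrightarrow> dropWhile P (xs@ys) = dropWhile P xs @ ys"
  by (induction xs) auto

lemma sigma_fac_pos: "sigma_fac j > 0"
  by (induction j rule: sigma_fac.induct) auto

lemma sigma_fac_app: "d \<notin> set j \<Longrightarrow> sigma_fac (j @ replicate r d) = sigma_fac j * fact r"
proof (induction j rule: sigma_fac.induct)
  case 1
  then show ?case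
  proof (cases r)
    case (Suc r') then show ?thesis
      by (simp add: takeWhile_replicate dropWhile_replicate)
  qed simp
next
  case (2 x xs)
  have dx: "d \<noteq> x" using 2 by auto
  show ?case
  proof (cases "\<forall>y\<in>set xs. y = x")
    case True
    then have dw: "dropWhile (\<lambda>y. y = x) xs = []" and tw: "takeWhile (\<lambda>y. y = x) xs = xs"
      by (simp_all add: takeWhile_eq_all_conv)
    moreover have "takeWhile (\<lambda>y. y = x) (replicate r d) = []" using dx by (cases r) auto
    moreover have "dropWhile (\<lambda>y. y = x) (replicate r d) = replicate r d" using dx by (cases r) auto
    moreover have "sigma_fac (replicate r d) = fact r"
      by (cases r) (simp_all add: takeWhile_replicate dropWhile_replicate)
    ultimately show ?thesis using True by (simp add: takeWhile_append dropWhile_append tw dw)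
  next
    case False
    then have "sigma_fac (dropWhile (\<lambda>y. y = x) xs @ replicate r d) = sigma_fac (dropWhile (\<lambda>y. y = x) xs) * fact r"
      using 2 by (intro 2(1)) (auto dest: set_dropWhileD)
    then show ?thesis by (simp add: tw_app[OF False] dw_app[OF False])
  qed
qed

lemma sorted_split_max: "sorted J \<Longrightarrow> set J \<subseteq> {..d} \<Longrightarrow> \<exists>j r. J = j @ replicate r d \<and> d \<notin> set j"
proof (induction J)
  case Nil then show ?case by (intro exI[of _ "[]"] exI[of _ 0]) simp
next
  case (Cons x J)
  then obtain j r where J: "J = j @ replicate r d" "d \<notin> set j" by auto
  show ?case
  proof (cases "x = d")
    case True
    have "j = []"
    proof (rule ccontr)
      assume "j \<noteq> []"
      then obtain y where "y \<in> set j" by (cases j) auto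
      then have "x \<le> y" "y \<le> d" "y \<noteq> d" using Cons.prems J by auto
      then show False using True by simp
    qed
    then show ?thesis using J True by (intro exI[of _ "[]"] exI[of _ "Suc r"]) simp
  next
    case False
    then show ?thesis using J by (intro exI[of _ "x#j"] exI[of _ r]) simp
  qed
qed

lemma finite_incr_words: "finite (incr_words s k)"
proof -
  have "incr_words s k \<subseteq> {j. set j \<subseteq> {1..s} \<and> length j = k}"
    by (auto simp: incr_words_def)
  then show ?thesis by (rule finite_subset) (simp add: finite_lists_length_eq)
qed

lemma incr_words_Suc_sum:
  "(\<Sum>J\<in>incr_words (Suc s) k. G J) = (\<Sum>p\<le>k. \<Sum>j\<in>incr_words s p. G (j @ replicate (k-p) (Suc s)))"
proof -
  let ?h = "\<lambda>(p,j). j @ replicate (k-p) (Suc s)"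
  let ?S = "SIGMA p:{..k}. incr_words s p"
  have H: "\<And>p1 j1 p2 j2. (p1,j1)\<in>?S \<Longrightarrow> (p2,j2) \<in>?S \<Longrightarrow>
     j1 @ replicate (k-p1) (Suc s) = j2 @ replicate (k-p2) (Suc s) \<Longrightarrow> p1 = p2 \<and> j1 = j2"
  proof -
    fix p1 j1 p2 j2 assume a: "(p1,j1)\<in>?S" "(p2,j2) \<in>?S"
      and e: "j1 @ replicate (k-p1) (Suc s) = j2 @ replicate (k-p2) (Suc s)"
    have "Suc s \<notin> set j1" "Suc s \<notin> set j2" using a by (auto simp: incr_words_def)
    then have "j1 = j2" by (rule rep_inj[OF _ _ e])
    then show "p1 = p2 \<and> j1 = j2" using a by (auto simp: incr_words_def)
  qed
  have inj: "inj_on ?h ?S"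
  proof (rule inj_onI)
    fix x y assume "x \<in> ?S" "y \<in> ?S" "?h x = ?h y"
    then show "x = y" using H[of "fst x" "snd x" "fst y" "snd y"] by (cases x, cases y) simp
  qed
  have img: "?h ` ?S = incr_words (Suc s) k"
  proof
    show "?h ` ?S \<subseteq> incr_words (Suc s) k"
    proof
      fix J assume "J \<in> ?h ` ?S"
      then obtain p j where pj: "(p, j) \<in> ?S" "J = j @ replicate (k - p) (Suc s)" by auto
      then have "p \<le> k" "length j = p" "sorted j" "set j \<subseteq> {1..s}" by (auto simp: incr_words_def)
      then show "J \<in> incr_words (Suc s) k" unfolding pj(2)
        by (auto simp: incr_words_def sorted_append)
    qed
  next
    show "incr_words (Suc s) k \<subseteq> ?h ` ?S"
    proof
      fix J assume J: "J \<in> incr_words (Suc s) k"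
      have "sorted J" "set J \<subseteq> {..Suc s}" using J by (auto simp: incr_words_def)
      then obtain j r where jr: "J = j @ replicate r (Suc s)" "Suc s \<notin> set j"
        using sorted_split_max[of J "Suc s"] by blast
      have "length j \<le> k" "r = k - length j" using J jr by (auto simp: incr_words_def)
      moreover have "j \<in> incr_words s (length j)"
      proof -
        have sj: "set j \<subseteq> {1..Suc s}" "sorted j" using J jr by (auto simp: incr_words_def sorted_append)
        have "set j \<subseteq> {1..s}"
        proof
          fix x assume "x \<in> set j"
          then show "x \<in> {1..s}" using sj jr(2) by (cases "x = Suc s") (auto simp: le_Suc_eq)
        qed
        then show ?thesis using sj by (simp add: incr_words_def)
      qed
      ultimately show "J \<in> ?h ` ?S" using jr
        by (intro image_eqI[of _ _ "(length j, j)"]) auto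
    qed
  qed
  have "(\<Sum>J\<in>incr_words (Suc s) k. G J) = (\<Sum>x\<in>?S. G (?h x))"
    using sum.reindex[OF inj, of G] img by simp
  also have "\<dots> = (\<Sum>p\<le>k. \<Sum>j\<in>incr_words s p. G (j @ replicate (k-p) (Suc s)))"
    by (subst sum.Sigma) (auto simp: finite_incr_words intro!: sum.cong)
  finally show ?thesis .
qed

definition vterm :: "(nat \<Rightarrow> real) \<Rightarrow> (nat \<Rightarrow> real) \<Rightarrow> nat list \<Rightarrow> nat list \<Rightarrow> real" where
  "vterm b c j i = prod_list (map b j) / real (sigma_fac j) * prod_list (map2 (\<lambda>x y. c x ^ (y - 1)) j i)"

lemma vpoly_vterm: "vpoly b c s i = (\<Sum>j\<in>incr_words s (length i). vterm b c j i)"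
  unfolding vpoly_def vterm_def
proof (intro sum.cong refl)
  fix j assume "j \<in> incr_words s (length i)"
  then have l: "length j = length i" by (simp add: incr_words_def)
  show "(\<Prod>l<length i. b (j ! l)) / real (sigma_fac j) * (\<Prod>l<length i. c (j ! l) ^ (i ! l - 1)) =
    prod_list (map b j) / real (sigma_fac j) * prod_list (map2 (\<lambda>x y. c x ^ (y - 1)) j i)"
    using prod_nth_map[OF l, of b] prod_nth_map2[OF l, of "\<lambda>x y. c x ^ (y - 1)"] by simp
qed

lemma vpoly_0: "vpoly b c 0 i = Zc i"
proof -
  have "incr_words 0 (length i) = (if i = [] then {[]} else {})"
    by (auto simp: incr_words_def)
  then show ?thesis by (simp add: vpoly_vterm Zc_def vterm_def)
qed

lemma prod_list_cmult: "prod_list (map (\<lambda>x. k * f x) L) = (k::real) ^ length L * prod_list (map f L)"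
  by (induction L) auto

lemma vterm_app:
  assumes "length j = p" "p \<le> length i" "Suc s \<notin> set j"
  shows "vterm b c (j @ replicate (length i - p) (Suc s)) i =
    vterm b c j (take p i) * Echr (\<lambda>a. b (Suc s) * c (Suc s) ^ (a - 1)) (drop p i)"
proof -
  let ?d = "Suc s" and ?r = "length i - p"
  have z: "zip (j @ replicate ?r ?d) i = zip j (take p i) @ zip (replicate ?r ?d) (drop p i)"
    using assms zip_append[of j "take p i" "replicate ?r ?d" "drop p i"] by simp
  have z2: "map2 (\<lambda>x y. c x ^ (y - 1)) (replicate ?r ?d) (drop p i) = map (\<lambda>y. c ?d ^ (y - 1)) (drop p i)"
    by (simp add: zip_replicate1 map_zip_map)
  have sf: "real (sigma_fac (j @ replicate ?r ?d)) = real (sigma_fac j) * fact ?r"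
    using sigma_fac_app[OF assms(3)] by simp
  have pos: "real (sigma_fac j) \<noteq> 0" using sigma_fac_pos[of j] by simp
  show ?thesis
    unfolding vterm_def Echr_def
    by (simp add: z z2 sf prod_list_cmult assms del: map2_map_map)
qed

lemma vpoly_Suc: "vpoly b c (Suc s) i = conv (vpoly b c s) (Echr (\<lambda>a. b (Suc s) * c (Suc s) ^ (a - 1))) i"
proof -
  let ?E = "Echr (\<lambda>a. b (Suc s) * c (Suc s) ^ (a - 1))"
  have "vpoly b c (Suc s) i = (\<Sum>p\<le>length i. \<Sum>j\<in>incr_words s p.
          vterm b c (j @ replicate (length i - p) (Suc s)) i)"
    by (simp add: vpoly_vterm incr_words_Suc_sum)
  also have "\<dots> = (\<Sum>p\<le>length i. \<Sum>j\<in>incr_words s p. vterm b c j (take p i) * ?E (drop p i))"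
    by (intro sum.cong refl vterm_app) (auto simp: incr_words_def)
  also have "\<dots> = (\<Sum>p\<le>length i. vpoly b c s (take p i) * ?E (drop p i))"
    by (intro sum.cong refl) (simp add: vpoly_vterm sum_distrib_right min_absorb2)
  also have "\<dots> = conv (vpoly b c s) ?E i"
    by (simp add: conv_def Dsum_nth)
  finally show ?thesis .
qed

lemma chr_vpoly: "chr UNIV (vpoly b c s)"
proof (induction s)
  case 0 then show ?case using chr_Zc by (simp add: vpoly_0[abs_def])
next
  case (Suc s) then show ?case by (simp add: vpoly_Suc[abs_def] chr_conv chr_Echr)
qed

lemma wcoef_snoc: "wcoef (w @ [a]) = wcoef w / real (a + sum_list w)"
proof -
  have 1: "(\<Prod>l<length w. real (\<Sum>t\<le>l. (w @ [a]) ! t)) = (\<Prod>l<length w. real (\<Sum>t\<le>l. w ! t))"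
    by (intro prod.cong refl arg_cong[where f=real] sum.cong) (auto simp: nth_append)
  have 2: "(\<Sum>t\<le>length w. (w @ [a]) ! t) = a + sum_list w"
    by (simp add: sum.atMost_Suc_shift nth_append sum_list_sum_nth atLeast0LessThan lessThan_Suc_atMost[symmetric]
        sum.lessThan_Suc del: sum.atMost_Suc)
  show ?thesis unfolding wcoef_def length_append_singleton prod.lessThan_Suc 1 2 by simp
qed

lemma wcoef_Wr: "wcoef w = Wr (rev w)"
proof (induction w rule: rev_induct)
  case Nil then show ?case by (simp add: wcoef_def)
next
  case (snoc a w) then show ?case by (simp add: wcoef_snoc sum_list_rev)
qed



lemma rev_shuffles:
  assumes "set xs \<inter> set ys = {}"
  shows "rev ` shuffles xs ys = shuffles (rev xs) (rev ys)"
proof -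
  let ?P = "\<lambda>x. x \<in> set xs"
  have 1: "shuffles xs ys = partition ?P -` {(xs, ys)}"
    using assms by (intro inv_image_partition[symmetric]) auto
  have 2: "shuffles (rev xs) (rev ys) = partition ?P -` {(rev xs, rev ys)}"
    using assms by (intro inv_image_partition[symmetric]) auto
  show ?thesis unfolding 1 2
  proof
    show "rev ` partition ?P -` {(xs, ys)} \<subseteq> partition ?P -` {(rev xs, rev ys)}"
      by (auto simp: rev_filter[symmetric] o_def)
  next
    show "partition ?P -` {(rev xs, rev ys)} \<subseteq> rev ` partition ?P -` {(xs, ys)}"
    proof
      fix z assume "z \<in> partition ?P -` {(rev xs, rev ys)}"
      then have "rev z \<in> partition ?P -` {(xs, ys)}"
        by (auto simp: rev_filter[symmetric] o_def)
      then show "z \<in> rev ` partition ?P -` {(xs, ys)}"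
        by (intro image_eqI[of _ _ "rev z"]) auto
    qed
  qed
qed

lemma shuffles_upt_filter:
  assumes "z \<in> shuffles [0..<n] [n..<N]" "n \<le> N"
  shows "filter (\<lambda>x. x < n) z = [0..<n]" "filter (\<lambda>x. \<not> x < n) z = [n..<N]"
proof -
  have "shuffles [0..<n] [n..<N] = partition (\<lambda>x. x < n) -` {([0..<n], [n..<N])}"
    by (intro inv_image_partition[symmetric]) auto
  then show "filter (\<lambda>x. x < n) z = [0..<n]" "filter (\<lambda>x. \<not> x < n) z = [n..<N]"
    using assms by (auto simp: o_def)
qed

lemma sorted_wrt_filter_nth:
  "sorted_wrt R (filter P z) \<Longrightarrow> p < q \<Longrightarrow> q < length z \<Longrightarrow> P (z!p) \<Longrightarrow> P (z!q) \<Longrightarrow> R (z!p) (z!q)"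
proof (induction z arbitrary: p q)
  case Nil then show ?case by simp
next
  case (Cons x z)
  show ?case
  proof (cases p)
    case 0
    then obtain q' where q: "q = Suc q'" using Cons.prems by (cases q) auto
    then have "z!q' \<in> set (filter P z)" using Cons.prems by auto
    then show ?thesis using Cons.prems 0 q by auto
  next
    case (Suc p')
    then obtain q' where q: "q = Suc q'" using Cons.prems by (cases q) auto
    have "sorted_wrt R (filter P z)" using Cons.prems by (auto split: if_splits)
    then show ?thesis using Cons.IH[of p' q'] Cons.prems Suc q by auto
  qed
qed

lemma filter_map_perm_eq:
  assumes perm: "\<sigma> permutes {0..<N}" and T: "T = {x\<in>{0..<N}. Q x}"
    and mono: "\<forall>p q. p < q \<and> q < N \<and> Q (\<sigma> p) \<and> Q (\<sigma> q) \<longrightarrow> \<sigma> p < \<sigma> q"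
    and L: "sorted L" "distinct L" "set L = T"
  shows "filter Q (map \<sigma> [0..<N]) = L"
proof -
  let ?L' = "filter (\<lambda>p. Q (\<sigma> p)) [0..<N]"
  have e: "filter Q (map \<sigma> [0..<N]) = map \<sigma> ?L'" by (simp add: filter_map o_def)
  have "sorted_wrt (<) ?L'" by (rule sorted_wrt_filter) simp
  then have "sorted_wrt (\<lambda>p q. \<sigma> p < \<sigma> q) ?L'"
    by (rule sorted_wrt_mono_rel[rotated]) (use mono in auto)
  then have s: "sorted_wrt (<) (map \<sigma> ?L')" by (simp add: sorted_wrt_map)
  have inj: "inj \<sigma>" using perm permutes_inj by blast
  have set: "set (map \<sigma> ?L') = T"
  proof -
    have "set (map \<sigma> ?L') = {x \<in> \<sigma> ` {0..<N}. Q x}" by auto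
    also have "\<sigma> ` {0..<N} = {0..<N}" using permutes_image[OF perm] .
    finally show ?thesis using T by simp
  qed
  show ?thesis unfolding e
    by (rule sorted_distinct_set_unique) (use s set L in \<open>auto simp: strict_sorted_iff\<close>)
qed



lemma perm_sum:
  assumes len: "length w = n + m"
  shows "(\<Sum>\<sigma>\<in>shuffles_perm n m. F (permute_word \<sigma> w)) = (\<Sum>z\<in>shuffles [0..<n] [n..<n+m]. F (map (nth w) z))"
proof (rule sum.reindex_bij_witness[where j="\<lambda>\<sigma>. map \<sigma> [0..<n+m]" and i="\<lambda>z p. if p < n+m then z!p else p"])
  let ?N = "n + m"
  have part: "shuffles [0..<n] [n..<?N] = partition (\<lambda>x. x < n) -` {([0..<n], [n..<?N])}"
    by (intro inv_image_partition[symmetric]) auto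
  fix \<sigma> assume S: "\<sigma> \<in> shuffles_perm n m"
  then have perm: "\<sigma> permutes {0..<?N}"
    and m1: "\<forall>p q. p < q \<and> q < ?N \<and> \<sigma> p < n \<and> \<sigma> q < n \<longrightarrow> \<sigma> p < \<sigma> q"
    and m2: "\<forall>p q. p < q \<and> q < ?N \<and> n \<le> \<sigma> p \<and> n \<le> \<sigma> q \<longrightarrow> \<sigma> p < \<sigma> q"
    by (auto simp: shuffles_perm_def)
  show "(\<lambda>p. if p < ?N then map \<sigma> [0..<?N] ! p else p) = \<sigma>"
  proof
    fix p show "(if p < ?N then map \<sigma> [0..<?N] ! p else p) = \<sigma> p"
      using permutes_not_in[OF perm, of p] by auto
  qed
  have f1: "filter (\<lambda>x. x < n) (map \<sigma> [0..<?N]) = [0..<n]"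
    by (rule filter_map_perm_eq[OF perm _ m1]) auto
  have m2': "\<forall>p q. p < q \<and> q < ?N \<and> \<not> \<sigma> p < n \<and> \<not> \<sigma> q < n \<longrightarrow> \<sigma> p < \<sigma> q"
    using m2 by (auto simp: not_less)
  have f2: "filter (\<lambda>x. \<not> x < n) (map \<sigma> [0..<?N]) = [n..<?N]"
    by (rule filter_map_perm_eq[OF perm _ m2']) auto
  show "map \<sigma> [0..<?N] \<in> shuffles [0..<n] [n..<?N]"
    unfolding part using f1 f2 by (simp add: o_def)
  show "F (map ((!) w) (map \<sigma> [0..<?N])) = F (permute_word \<sigma> w)"
    by (simp add: permute_word_def len o_def)
next
  let ?N = "n + m"
  fix z assume T: "z \<in> shuffles [0..<n] [n..<?N]"
  have lz: "length z = ?N" using length_shuffles[OF T] by simp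
  show "map (\<lambda>p. if p < ?N then z ! p else p) [0..<?N] = z"
    by (rule nth_equalityI) (auto simp: lz)
  have dz: "distinct z" by (rule distinct_disjoint_shuffles[OF _ _ _ T]) auto
  have sz: "set z = {0..<?N}" using set_shuffles[OF T] by auto
  have bij: "bij_betw ((!) z) {0..<?N} {0..<?N}"
    by (rule bij_betw_nth[OF dz]) (auto simp: lz sz)
  have perm: "(\<lambda>p. if p < ?N then z ! p else p) permutes {0..<?N}"
    by (rule bij_imp_permutes) (auto intro: bij_betw_cong[THEN iffD1, OF _ bij])
  have f1: "filter (\<lambda>x. x < n) z = [0..<n]" and f2: "filter (\<lambda>x. \<not> x < n) z = [n..<?N]"
    using shuffles_upt_filter[OF T] by auto
  have m1: "\<forall>p q. p < q \<and> q < ?N \<and> z!p < n \<and> z!q < n \<longrightarrow> z!p < z!q"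
    using sorted_wrt_filter_nth[of "(<)" "\<lambda>x. x < n" z] f1 lz by auto
  have m2: "\<forall>p q. p < q \<and> q < ?N \<and> n \<le> z!p \<and> n \<le> z!q \<longrightarrow> z!p < z!q"
    using sorted_wrt_filter_nth[of "(<)" "\<lambda>x. \<not> x < n" z] f2 lz by (auto simp: not_less)
  show "(\<lambda>p. if p < ?N then z ! p else p) \<in> shuffles_perm n m"
    unfolding shuffles_perm_def using perm m1 m2 by auto
qed

theorem mainTheorem5:
  fixes b c :: "nat \<Rightarrow> real" and s :: nat and xs ys :: "nat list"
  assumes "xs \<noteq> []" and "ys \<noteq> []"
    and "\<forall>x\<in>set xs. 0 < x" and "\<forall>y\<in>set ys. 0 < y"
  shows "vpoly b c s xs * vpoly b c s ys =
           (\<Sum>\<sigma>\<in>shuffles_perm (length xs) (length ys). vpoly b c s (permute_word \<sigma> (xs @ ys)))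
       \<and> wcoef xs * wcoef ys =
           (\<Sum>\<sigma>\<in>shuffles_perm (length xs) (length ys). wcoef (permute_word \<sigma> (xs @ ys)))"
proof -
  let ?n = "length xs" and ?m = "length ys" and ?w = "xs @ ys"
  let ?A = "[0..<?n]" and ?B = "[?n..<?n+?m]"
  have mA: "map ((!) ?w) ?A = xs" by (rule nth_equalityI) (auto simp: nth_append)
  have mB: "map ((!) ?w) ?B = ys" by (rule nth_equalityI) (auto simp: nth_append)
  have dj: "set ?A \<inter> set ?B = {}" by auto
  have "(\<Sum>\<sigma>\<in>shuffles_perm ?n ?m. vpoly b c s (permute_word \<sigma> ?w))
      = (\<Sum>z\<in>shuffles ?A ?B. vpoly b c s (map ((!) ?w) z))"
    by (rule perm_sum) simp
  also have "\<dots> = Ssum (\<lambda>z. vpoly b c s (map ((!) ?w) z)) ?A ?B"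
    by (rule Ssum_set[symmetric]) auto
  also have "\<dots> = Ssum (vpoly b c s) xs ys"
    using Ssum_map[of "vpoly b c s" "(!) ?w" ?A ?B] mA mB by simp
  also have "\<dots> = vpoly b c s xs * vpoly b c s ys"
    using chr_vpoly[of b c s] unfolding chr_def by simp
  finally have V: "vpoly b c s xs * vpoly b c s ys =
      (\<Sum>\<sigma>\<in>shuffles_perm ?n ?m. vpoly b c s (permute_word \<sigma> ?w))" by simp
  have "(\<Sum>\<sigma>\<in>shuffles_perm ?n ?m. wcoef (permute_word \<sigma> ?w))
      = (\<Sum>z\<in>shuffles ?A ?B. Wr (map ((!) ?w) (rev z)))"
    by (subst perm_sum) (simp_all add: wcoef_Wr rev_map)
  also have "\<dots> = (\<Sum>z\<in>rev ` shuffles ?A ?B. Wr (map ((!) ?w) z))"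
    by (subst sum.reindex) (auto simp: inj_on_def)
  also have "\<dots> = (\<Sum>z\<in>shuffles (rev ?A) (rev ?B). Wr (map ((!) ?w) z))"
    by (simp only: rev_shuffles[OF dj])
  also have "\<dots> = Ssum (\<lambda>z. Wr (map ((!) ?w) z)) (rev ?A) (rev ?B)"
    by (rule Ssum_set[symmetric]) auto
  also have "\<dots> = Ssum Wr (rev xs) (rev ys)"
  proof -
    have mAr: "map ((!) ?w) (rev ?A) = rev xs" using mA by (metis rev_map)
    have mBr: "map ((!) ?w) (rev ?B) = rev ys" using mB by (metis rev_map)
    show ?thesis using Ssum_map[of Wr "(!) ?w" "rev ?A" "rev ?B"] unfolding mAr mBr by simp
  qed
  also have "\<dots> = Wr (rev xs) * Wr (rev ys)"
  proof -
    have "set (rev xs) \<subseteq> {x. 0<x}" "set (rev ys) \<subseteq> {x. 0<x}" using assms(3,4) by auto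
    then show ?thesis by (rule chr_Wr_aux[symmetric])
  qed
  also have "\<dots> = wcoef xs * wcoef ys" by (simp add: wcoef_Wr)
  finally show ?thesis using V by simp
qed

end
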